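(* Let ${\sf r}$ be an admissible reflection coefficient, $Y(\lambda,x,t)$ the solution of RHP 2, and $L(x,t)$ defined by $Y(0,x,t)\sigma_3Y(0,x,t)^{-1}=\sum_{j=1}^3L_j(x,t)\sigma_j$. Then $L_1,L_2,L_3$ are real-valued.
   Context: Fix real $J_1<J_2<J_3$; $\rho=\tfrac12\sqrt{J_3-J_1}$, $k=\sqrt{(J_2-J_1)/(J_3-J_1)}$, $K=K(k)$, $K'=K(\sqrt{1-k^2})$. $w_1=\rho/\mathrm{sn}(\lambda,k)$, $w_2=\rho\,\mathrm{dn}/\mathrm{sn}$, $w_3=\rho\,\mathrm{cn}/\mathrm{sn}$; torus $\mathbb T^2=\mathbb C/(4K\mathbb Z+4\mathrm iK'\mathbb Z)$; $\sigma_j$ Pauli matrices; $\Gamma_1=\{\Im\lambda=0\}$, $\Gamma_2=\{\Im\lambda=2K'\}$, $\Omega_\pm=\{0\le\pm\Im\lambda\le2K',|\Re\lambda|\le2K\}$. Admissible reflection coefficient: ${\sf r}\in C^\infty(\Gamma_1\cup\Gamma_2)$, ${\sf r}(\lambda+2K)=-{\sf r}(\lambda)$, ${\sf r}(\lambda+2\mathrm iK')=-\overline{{\sf r}(\bar\lambda)}$, ${\sf r}(0)=0$, ${\sf r}^{(n)}(\lambda)=O(\lambda^m)$ as $\lambda\to0$ for all $n,m$. RHP 2: $Y(\lambda,x,t)$ bounded, analytic on $\mathbb T^2\setminus(\Gamma_1\cup\Gamma_2)$, boundary values from $\Omega_\pm$ satisfy $Y_+=Y_-G$, $G=\begin{pmatrix}1+|{\sf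 r}|^2&\overline{\sf r}e^{-2\mathrm i\vartheta}\\ {\sf r}e^{2\mathrm i\vartheta}&1\end{pmatrix}$, $\vartheta=xw_3-2tw_1w_2$; $\sigma_3Y(\lambda+2K)\sigma_3=Y(\lambda)$, $\sigma_1Y(\lambda+2\mathrm iK')\sigma_1=Y(\lambda)$, $\det Y\equiv1$ (unique up to sign). $Y(0,x,t)$ is the common boundary value at $\lambda=0$. *)

theory Defs
  imports "HOL-Analysis.Analysis" "HOL-Library.Landau_Symbols"
begin

section \<open>Complete elliptic integral and Jacobi elliptic functions (via theta functions, DLMF 22.2)\<close>

definition ellK :: "real \<Rightarrow> real" where
  "ellK k = integral {0..pi/2} (\<lambda>\<theta>. 1 / sqrt (1 - k\<^sup>2 * (sin \<theta>)\<^sup>2))"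

definition nome :: "real \<Rightarrow> real" where
  "nome k = exp (- pi * ellK (sqrt (1 - k\<^sup>2)) / ellK k)"

definition theta1 :: "real \<Rightarrow> complex \<Rightarrow> complex" where
  "theta1 q z = 2 * (\<Sum>n. (-1) ^ n * of_real (q powr ((real n + 1/2)\<^sup>2)) * sin ((2 * of_nat n + 1) * z))"

definition theta2 :: "real \<Rightarrow> complex \<Rightarrow> complex" where
  "theta2 q z = 2 * (\<Sum>n. of_real (q powr ((real n + 1/2)\<^sup>2)) * cos ((2 * of_nat n + 1) * z))"

definition theta3 :: "real \<Rightarrow> complex \<Rightarrow> complex" where
  "theta3 q z = 1 + 2 * (\<Sum>n. of_real (q ^ ((Suc n)\<^sup>2)) * cos (2 * of_nat (Suc n) * z))"

definition theta4 :: "real \<Rightarrow> complex \<Rightarrow> complex" where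
  "theta4 q z = 1 + 2 * (\<Sum>n. (-1) ^ (Suc n) * of_real (q ^ ((Suc n)\<^sup>2)) * cos (2 * of_nat (Suc n) * z))"

definition jacobi_sn :: "complex \<Rightarrow> real \<Rightarrow> complex" where
  "jacobi_sn u k = (let q = nome k; v = of_real pi * u / (2 * of_real (ellK k)) in
     theta3 q 0 / theta2 q 0 * theta1 q v / theta4 q v)"

definition jacobi_cn :: "complex \<Rightarrow> real \<Rightarrow> complex" where
  "jacobi_cn u k = (let q = nome k; v = of_real pi * u / (2 * of_real (ellK k)) in
     theta4 q 0 / theta2 q 0 * theta2 q v / theta4 q v)"

definition jacobi_dn :: "complex \<Rightarrow> real \<Rightarrow> complex" where
  "jacobi_dn u k = (let q = nome k; v = of_real pi * u / (2 * of_real (ellK k)) in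
     theta4 q 0 / theta3 q 0 * theta3 q v / theta4 q v)"

definition rho_par :: "real \<Rightarrow> real \<Rightarrow> real \<Rightarrow> real" where
  "rho_par J1 J2 J3 = sqrt (J3 - J1) / 2"

definition k_par :: "real \<Rightarrow> real \<Rightarrow> real \<Rightarrow> real" where
  "k_par J1 J2 J3 = sqrt ((J2 - J1) / (J3 - J1))"

definition K_par :: "real \<Rightarrow> real \<Rightarrow> real \<Rightarrow> real" where
  "K_par J1 J2 J3 = ellK (k_par J1 J2 J3)"

definition K'_par :: "real \<Rightarrow> real \<Rightarrow> real \<Rightarrow> real" where
  "K'_par J1 J2 J3 = ellK (sqrt (1 - (k_par J1 J2 J3)\<^sup>2))"

definition w1 :: "real \<Rightarrow> real \<Rightarrow> real \<Rightarrow> complex \<Rightarrow> complex" where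
  "w1 J1 J2 J3 z = of_real (rho_par J1 J2 J3) / jacobi_sn z (k_par J1 J2 J3)"

definition w2 :: "real \<Rightarrow> real \<Rightarrow> real \<Rightarrow> complex \<Rightarrow> complex" where
  "w2 J1 J2 J3 z = of_real (rho_par J1 J2 J3) * jacobi_dn z (k_par J1 J2 J3) / jacobi_sn z (k_par J1 J2 J3)"

definition w3 :: "real \<Rightarrow> real \<Rightarrow> real \<Rightarrow> complex \<Rightarrow> complex" where
  "w3 J1 J2 J3 z = of_real (rho_par J1 J2 J3) * jacobi_cn z (k_par J1 J2 J3) / jacobi_sn z (k_par J1 J2 J3)"

definition vartheta :: "real \<Rightarrow> real \<Rightarrow> real \<Rightarrow> real \<Rightarrow> real \<Rightarrow> complex \<Rightarrow> complex" where
  "vartheta J1 J2 J3 x t z = of_real x * w3 J1 J2 J3 z - 2 * of_real t * w1 J1 J2 J3 z * w2 J1 J2 J3 z"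

definition mat2 :: "complex \<Rightarrow> complex \<Rightarrow> complex \<Rightarrow> complex \<Rightarrow> complex^2^2" where
  "mat2 a b c d = (\<chi> i j. if i = 1 then (if j = 1 then a else b) else (if j = 1 then c else d))"

definition cscale :: "complex \<Rightarrow> complex^2^2 \<Rightarrow> complex^2^2" where
  "cscale c A = (\<chi> i j. c * A $ i $ j)"

definition sigma1 :: "complex^2^2" where "sigma1 = mat2 0 1 1 0"
definition sigma2 :: "complex^2^2" where "sigma2 = mat2 0 (- \<i>) \<i> 0"
definition sigma3 :: "complex^2^2" where "sigma3 = mat2 1 0 0 (-1)"

definition smooth_cfun :: "(real \<Rightarrow> complex) \<Rightarrow> bool" where
  "smooth_cfun f \<longleftrightarrow> (\<forall>n x. ((deriv ^^ n) (\<lambda>s. Re (f s))) field_differentiable (at x)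
                             \<and> ((deriv ^^ n) (\<lambda>s. Im (f s))) field_differentiable (at x))"

text \<open>The reflection coefficient is a function on \<open>\<Gamma>\<^sub>1 \<union> \<Gamma>\<^sub>2\<close>; we represent it by a function
  on \<open>\<complex>\<close> of which only the values on the lines \<open>Im z = 0\<close> and \<open>Im z = 2K'\<close> are relevant.\<close>
definition admissible_r :: "real \<Rightarrow> real \<Rightarrow> real \<Rightarrow> (complex \<Rightarrow> complex) \<Rightarrow> bool" where
  "admissible_r J1 J2 J3 r \<longleftrightarrow>
     (let K = K_par J1 J2 J3; K' = K'_par J1 J2 J3 in
       smooth_cfun (\<lambda>s. r (of_real s))
     \<and> smooth_cfun (\<lambda>s. r (of_real s + \<i> * of_real (2 * K')))
     \<and> (\<forall>s::real. r (of_real s + of_real (2 * K)) = - r (of_real s))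
     \<and> (\<forall>s::real. r (of_real s + \<i> * of_real (2 * K') + of_real (2 * K))
                   = - r (of_real s + \<i> * of_real (2 * K')))
     \<and> (\<forall>s::real. r (of_real s + \<i> * of_real (2 * K')) = - cnj (r (cnj (of_real s))))
     \<and> r 0 = 0
     \<and> (\<forall>n m::nat. (deriv ^^ n) (\<lambda>s. Re (r (of_real s))) \<in> O[at 0](\<lambda>s. s ^ m)
                 \<and> (deriv ^^ n) (\<lambda>s. Im (r (of_real s))) \<in> O[at 0](\<lambda>s. s ^ m)))"

definition jumpG :: "real \<Rightarrow> real \<Rightarrow> real \<Rightarrow> (complex \<Rightarrow> complex) \<Rightarrow> real \<Rightarrow> real \<Rightarrow> complex \<Rightarrow> complex^2^2" where
  "jumpG J1 J2 J3 r x t z =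
     (let \<theta> = vartheta J1 J2 J3 x t z in
       mat2 (1 + of_real ((cmod (r z))\<^sup>2)) (cnj (r z) * exp (- 2 * \<i> * \<theta>))
            (r z * exp (2 * \<i> * \<theta>)) 1)"

text \<open>The torus minus the contours, lifted to \<open>\<complex>\<close>: all \<open>\<lambda>\<close> with \<open>Im \<lambda> \<notin> 2K'\<int>\<close>.\<close>
definition rhp_domain :: "real \<Rightarrow> real \<Rightarrow> real \<Rightarrow> complex set" where
  "rhp_domain J1 J2 J3 = {z. \<forall>n::int. Im z \<noteq> 2 * K'_par J1 J2 J3 * of_int n}"

text \<open>Functions on the torus are represented as functions on
  \<open>\<complex>\<close>; the periodicity \<open>4K, 4iK'\<close> follows from the two symmetry conditions.
  Boundary values from \<open>\<Omega>\<^sub>+\<close> (\<open>0 \<le> Im \<lambda> \<le> 2K'\<close>) and \<open>\<Omega>\<^sub>-\<close> (\<open>-2K' \<le> Im \<lambda> \<le> 0\<close>): on \<open>\<Gamma>\<^sub>1\<close> the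
  \<open>+\<close>-side is above, on \<open>\<Gamma>\<^sub>2\<close> the \<open>+\<close>-side is below.\<close>
definition solves_RHP2 ::
  "real \<Rightarrow> real \<Rightarrow> real \<Rightarrow> (complex \<Rightarrow> complex) \<Rightarrow> real \<Rightarrow> real \<Rightarrow> (complex \<Rightarrow> complex^2^2) \<Rightarrow> bool" where
  "solves_RHP2 J1 J2 J3 r x t Y \<longleftrightarrow>
     (let K = K_par J1 J2 J3; K' = K'_par J1 J2 J3; D = rhp_domain J1 J2 J3 in
       bounded (Y ` D)
     \<and> (\<forall>i j. (\<lambda>z. Y z $ i $ j) holomorphic_on D)
     \<and> (\<forall>s::real. \<exists>Yp Ym.
            (Y \<longlongrightarrow> Yp) (at (of_real s) within {z. Im z > 0})
          \<and> (Y \<longlongrightarrow> Ym) (at (of_real s) within {z. Im z < 0})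
          \<and> Yp = Ym ** jumpG J1 J2 J3 r x t (of_real s))
     \<and> (\<forall>s::real. let z0 = of_real s + \<i> * of_real (2 * K') in \<exists>Yp Ym.
            (Y \<longlongrightarrow> Yp) (at z0 within {z. Im z < 2 * K'})
          \<and> (Y \<longlongrightarrow> Ym) (at z0 within {z. Im z > 2 * K'})
          \<and> Yp = Ym ** jumpG J1 J2 J3 r x t z0)
     \<and> (\<forall>z\<in>D. sigma3 ** Y (z + of_real (2 * K)) ** sigma3 = Y z)
     \<and> (\<forall>z\<in>D. sigma1 ** Y (z + \<i> * of_real (2 * K')) ** sigma1 = Y z)
     \<and> (\<forall>z\<in>D. det (Y z) = 1))"

end

theory Submission
  imports Defs "HOL-Complex_Analysis.Complex_Analysis"
begin

definition adjm :: "complex^2^2 \<Rightarrow> complex^2^2" where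
  "adjm A = (\<chi> i j. cnj (A $ j $ i))"

lemma two_ne: "(1::2) \<noteq> 2" by simp

lemma mat2_nth [simp]:
  "mat2 a b c d $ 1 $ 1 = a" "mat2 a b c d $ 1 $ 2 = b"
  "mat2 a b c d $ 2 $ 1 = c" "mat2 a b c d $ 2 $ 2 = d"
  by (simp_all add: mat2_def)

lemma mat2_eta: "A = mat2 (A$1$1) (A$1$2) (A$2$1) (A$2$2)"
  unfolding mat2_def by (simp add: vec_eq_iff forall_2)

lemma mat2_eq_iff: "mat2 a b c d = mat2 a' b' c' d' \<longleftrightarrow> a = a' \<and> b = b' \<and> c = c' \<and> d = d'"
  by (metis mat2_nth)

lemma mat2_mult: "mat2 a b c d ** mat2 e f g h = mat2 (a*e+b*g) (a*f+b*h) (c*e+d*g) (c*f+d*h)"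
  by (simp add: matrix_matrix_mult_def vec_eq_iff forall_2 sum_2)

lemma adjm_mat2: "adjm (mat2 a b c d) = mat2 (cnj a) (cnj c) (cnj b) (cnj d)"
  by (simp add: adjm_def vec_eq_iff forall_2)

lemma det_mat2: "det (mat2 a b c d) = a*d - b*c"
  by (simp add: det_2)

lemma tendsto_matmult:
  fixes A B :: "'a \<Rightarrow> complex^2^2"
  assumes "(A \<longlongrightarrow> a) F" "(B \<longlongrightarrow> b) F"
  shows "((\<lambda>z. A z ** B z) \<longlongrightarrow> a ** b) F"
proof -
  have "((\<lambda>z. (A z ** B z) $ i $ j) \<longlongrightarrow> (a ** b) $ i $ j) F" for i j
    unfolding matrix_matrix_mult_def using assms
    by (simp add: sum_2) (intro tendsto_intros)
  then show ?thesis by (intro vec_tendstoI) simp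
qed

lemma tendsto_adjm:
  fixes A :: "'a \<Rightarrow> complex^2^2"
  assumes "(A \<longlongrightarrow> a) F"
  shows "((\<lambda>z. adjm (A z)) \<longlongrightarrow> adjm a) F"
proof -
  have "((\<lambda>z. adjm (A z) $ i $ j) \<longlongrightarrow> adjm a $ i $ j) F" for i j
    unfolding adjm_def using assms by simp (intro tendsto_intros)
  then show ?thesis by (intro vec_tendstoI) simp
qed

lemma tendsto_transfer:
  fixes f :: "complex \<Rightarrow> 'b::metric_space"
  assumes "(f \<longlongrightarrow> l) (at a within S)"
    and "\<And>z. z \<in> T \<Longrightarrow> h z \<in> S \<and> dist (h z) a = dist z b"
  shows "((\<lambda>z. f (h z)) \<longlongrightarrow> l) (at b within T)"
  using assms unfolding Lim_within by metis

lemma ext_continuous: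
  fixes f g :: "complex \<Rightarrow> 'b::metric_space"
  assumes lim: "\<And>x. (f \<longlongrightarrow> g x) (at x within D)"
    and lp: "\<And>x. x islimpt D"
  shows "continuous_on UNIV g"
proof -
  have "isCont g x" for x
  proof (rule continuous_at_eps_delta[THEN iffD2], intro allI impI)
    fix e :: real assume e: "e > 0"
    from lim[of x] e obtain d where d: "d > 0"
      and dd: "\<And>w. w \<in> D \<Longrightarrow> 0 < dist w x \<Longrightarrow> dist w x < d \<Longrightarrow> dist (f w) (g x) < e/2"
      unfolding Lim_within by (metis half_gt_zero)
    show "\<exists>d>0. \<forall>y. dist y x < d \<longrightarrow> dist (g y) (g x) < e"
    proof (intro exI[of _ d] conjI allI impI d)
      fix y assume y: "dist y x < d"
      show "dist (g y) (g x) < e"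
      proof (cases "y = x")
        case True then show ?thesis using e by simp
      next
        case False
        from lim[of y] e obtain d' where d': "d' > 0"
          and dd': "\<And>w. w \<in> D \<Longrightarrow> 0 < dist w y \<Longrightarrow> dist w y < d' \<Longrightarrow> dist (f w) (g y) < e/2"
          unfolding Lim_within by (metis half_gt_zero)
        define r where "r = min d' (min (d - dist y x) (dist y x))"
        have r: "r > 0" using d' y False by (simp add: r_def)
        from lp[of y] r obtain w where w: "w \<in> D" "w \<noteq> y" "dist w y < r"
          unfolding islimpt_approachable by blast
        have "dist w x \<le> dist w y + dist y x" by (rule dist_triangle)
        then have wx: "dist w x < d" using w(3) by (simp add: r_def)
        have "dist y x \<le> dist w y + dist w x" by (metis dist_commute dist_triangle)
        then have "w \<noteq> x" using w(3) r_def by auto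
        then have 1: "dist (f w) (g x) < e/2" using dd[OF w(1) _ wx] by simp
        have 2: "dist (f w) (g y) < e/2" using dd'[OF w(1)] w r_def by simp
        have "dist (g y) (g x) \<le> dist (f w) (g y) + dist (f w) (g x)" by (rule dist_triangle3)
        then show ?thesis using 1 2 by simp
      qed
    qed
  qed
  then show ?thesis by (simp add: continuous_on_eq_continuous_at)
qed

lemma ellK_ge:
  assumes "0 \<le> k" "k < 1"
  shows "ellK k \<ge> pi/2"
proof -
  define f where "f = (\<lambda>\<theta>::real. 1 / sqrt (1 - k\<^sup>2 * (sin \<theta>)\<^sup>2))"
  have pos: "1 - k\<^sup>2 * (sin \<theta>)\<^sup>2 > 0" for \<theta>
  proof -
    have "k\<^sup>2 < 1" using assms by (simp add: power_less_one_iff abs_square_less_1)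
    moreover have "(sin \<theta>)\<^sup>2 \<le> 1" by (simp add: abs_square_le_1)
    ultimately have "k\<^sup>2 * (sin \<theta>)\<^sup>2 < 1"
      by (meson le_less_trans mult_left_le zero_le_power2)
    then show ?thesis by simp
  qed
  have ge1: "f \<theta> \<ge> 1" for \<theta>
  proof -
    have "1 - k\<^sup>2 * (sin \<theta>)\<^sup>2 \<le> 1" by simp
    then have "sqrt (1 - k\<^sup>2 * (sin \<theta>)\<^sup>2) \<le> 1" by simp
    moreover have "sqrt (1 - k\<^sup>2 * (sin \<theta>)\<^sup>2) > 0" using pos by simp
    ultimately show ?thesis unfolding f_def by simp
  qed
  have cont: "continuous_on {0..pi/2} f"
    unfolding f_def using pos by (intro continuous_intros) (auto simp: less_imp_neq[symmetric] dest: sym)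
  have "integral {0..pi/2} (\<lambda>_. 1::real) \<le> integral {0..pi/2} f"
    by (rule integral_le) (auto intro: integrable_continuous_interval cont ge1)
  then show ?thesis unfolding ellK_def f_def[symmetric] by simp
qed

lemma suminf_Reals:
  fixes f :: "nat \<Rightarrow> complex"
  assumes "\<And>n. f n \<in> \<real>" "summable f"
  shows "suminf f \<in> \<real>"
proof -
  have "Im (suminf f) = (\<Sum>n. Im (f n))" by (rule Im_suminf[OF assms(2)])
  also have "\<dots> = 0" using assms(1) by (simp add: complex_is_Real_iff)
  finally show ?thesis by (simp add: complex_is_Real_iff)
qed

lemma summable_geom_bound:
  fixes f :: "nat \<Rightarrow> complex"
  assumes "\<And>n. norm (f n) \<le> q ^ n" "0 \<le> q" "q < 1"
  shows "summable f"
  by (rule summable_comparison_test[of _ "\<lambda>n. q^n"]) (use assms in \<open>auto intro: summable_geometric\<close>)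




lemma real_series:
  fixes f :: "nat \<Rightarrow> complex"
  assumes "\<And>n. f n \<in> \<real>" "\<And>n. norm (f n) \<le> q ^ n" "0 \<le> q" "q < 1"
  shows "suminf f \<in> \<real>"
  using assms by (intro suminf_Reals summable_geom_bound[of _ q]) auto

lemma theta_real:
  assumes q: "0 < q" "q < 1"
  shows "theta1 q (of_real a) \<in> \<real>" "theta2 q (of_real a) \<in> \<real>"
        "theta3 q (of_real a) \<in> \<real>" "theta4 q (of_real a) \<in> \<real>"
proof -
  have pw: "q powr ((real n + 1/2)\<^sup>2) \<le> q ^ n" for n
  proof -
    have "real n \<le> (real n + 1/2)\<^sup>2" by (simp add: power2_eq_square algebra_simps)
    then have "q powr ((real n + 1/2)\<^sup>2) \<le> q powr (real n)"
      using q by (intro powr_mono') auto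
    then show ?thesis using q by (simp add: powr_realpow)
  qed
  have pw2: "q ^ ((Suc n)\<^sup>2) \<le> q ^ n" for n
    using q by (intro power_decreasing) (auto simp: power2_eq_square)
  have s: "sin ((2 * of_nat n + 1) * complex_of_real a) = of_real (sin ((2 * real n + 1) * a))" for n
    by (simp flip: sin_of_real)
  have c: "cos ((2 * of_nat n + 1) * complex_of_real a) = of_real (cos ((2 * real n + 1) * a))" for n
    by (simp flip: cos_of_real)
  have c2: "cos (2 * of_nat (Suc n) * complex_of_real a) = of_real (cos (2 * real (Suc n) * a))" for n
    by (simp flip: cos_of_real)
  have "(\<Sum>n. (-1) ^ n * of_real (q powr ((real n + 1/2)\<^sup>2)) * sin ((2 * of_nat n + 1) * complex_of_real a)) \<in> \<real>"
  proof (rule real_series[of _ q])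
    fix n
    show "(-1) ^ n * of_real (q powr ((real n + 1/2)\<^sup>2)) * sin ((2 * of_nat n + 1) * complex_of_real a) \<in> \<real>"
      unfolding s by simp
    have "norm ((-1) ^ n * of_real (q powr ((real n + 1/2)\<^sup>2)) * sin ((2 * of_nat n + 1) * complex_of_real a) :: complex)
       = q powr ((real n + 1/2)\<^sup>2) * \<bar>sin ((2 * real n + 1) * a)\<bar>"
      unfolding s by (simp add: norm_mult norm_power)
    also have "\<dots> \<le> q powr ((real n + 1/2)\<^sup>2) * 1" by (intro mult_left_mono) auto
    also have "\<dots> \<le> q ^ n" using pw by simp
    finally show "norm ((-1) ^ n * of_real (q powr ((real n + 1/2)\<^sup>2)) * sin ((2 * of_nat n + 1) * complex_of_real a) :: complex) \<le> q ^ n" .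
  qed (use q in auto)
  then show "theta1 q (of_real a) \<in> \<real>" unfolding theta1_def by simp
  have "(\<Sum>n. of_real (q powr ((real n + 1/2)\<^sup>2)) * cos ((2 * of_nat n + 1) * complex_of_real a)) \<in> \<real>"
  proof (rule real_series[of _ q])
    fix n
    show "of_real (q powr ((real n + 1/2)\<^sup>2)) * cos ((2 * of_nat n + 1) * complex_of_real a) \<in> \<real>"
      unfolding c by simp
    have "norm (of_real (q powr ((real n + 1/2)\<^sup>2)) * cos ((2 * of_nat n + 1) * complex_of_real a) :: complex)
       = q powr ((real n + 1/2)\<^sup>2) * \<bar>cos ((2 * real n + 1) * a)\<bar>"
      unfolding c by (simp add: norm_mult)
    also have "\<dots> \<le> q powr ((real n + 1/2)\<^sup>2) * 1" by (intro mult_left_mono) auto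
    also have "\<dots> \<le> q ^ n" using pw by simp
    finally show "norm (of_real (q powr ((real n + 1/2)\<^sup>2)) * cos ((2 * of_nat n + 1) * complex_of_real a) :: complex) \<le> q ^ n" .
  qed (use q in auto)
  then show "theta2 q (of_real a) \<in> \<real>" unfolding theta2_def by simp
  have "(\<Sum>n. of_real (q ^ ((Suc n)\<^sup>2)) * cos (2 * of_nat (Suc n) * complex_of_real a)) \<in> \<real>"
  proof (rule real_series[of _ q])
    fix n
    show "of_real (q ^ ((Suc n)\<^sup>2)) * cos (2 * of_nat (Suc n) * complex_of_real a) \<in> \<real>"
      unfolding c2 by simp
    have "norm (of_real (q ^ ((Suc n)\<^sup>2)) * cos (2 * of_nat (Suc n) * complex_of_real a) :: complex)
       = q ^ ((Suc n)\<^sup>2) * \<bar>cos (2 * real (Suc n) * a)\<bar>"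
      unfolding c2 using q by (simp add: norm_mult norm_power)
    also have "\<dots> \<le> q ^ ((Suc n)\<^sup>2) * 1" using q by (intro mult_left_mono) auto
    also have "\<dots> \<le> q ^ n" using pw2 by simp
    finally show "norm (of_real (q ^ ((Suc n)\<^sup>2)) * cos (2 * of_nat (Suc n) * complex_of_real a) :: complex) \<le> q ^ n" .
  qed (use q in auto)
  then show "theta3 q (of_real a) \<in> \<real>" unfolding theta3_def by simp
  have "(\<Sum>n. (-1) ^ Suc n * of_real (q ^ ((Suc n)\<^sup>2)) * cos (2 * of_nat (Suc n) * complex_of_real a)) \<in> \<real>"
  proof (rule real_series[of _ q])
    fix n
    show "(-1) ^ Suc n * of_real (q ^ ((Suc n)\<^sup>2)) * cos (2 * of_nat (Suc n) * complex_of_real a) \<in> \<real>"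
      unfolding c2 by simp
    have "norm ((-1) ^ Suc n * of_real (q ^ ((Suc n)\<^sup>2)) * cos (2 * of_nat (Suc n) * complex_of_real a) :: complex)
       = q ^ ((Suc n)\<^sup>2) * \<bar>cos (2 * real (Suc n) * a)\<bar>"
      unfolding c2 using q by (simp add: norm_mult norm_power)
    also have "\<dots> \<le> q ^ ((Suc n)\<^sup>2) * 1" using q by (intro mult_left_mono) auto
    also have "\<dots> \<le> q ^ n" using pw2 by simp
    finally show "norm ((-1) ^ Suc n * of_real (q ^ ((Suc n)\<^sup>2)) * cos (2 * of_nat (Suc n) * complex_of_real a) :: complex) \<le> q ^ n" .
  qed (use q in auto)
  then show "theta4 q (of_real a) \<in> \<real>" unfolding theta4_def by simp
qed


lemma nome_bounds:
  assumes "0 < k" "k < 1"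
  shows "0 < nome k" "nome k < 1"
proof -
  have K: "ellK k > 0" using ellK_ge[of k] assms pi_gt_zero by linarith
  have "k\<^sup>2 > 0" using assms by simp
  then have "sqrt (1 - k\<^sup>2) < 1" by simp
  moreover have "0 \<le> sqrt (1 - k\<^sup>2)" using assms by (simp add: power_le_one)
  ultimately have K': "ellK (sqrt (1 - k\<^sup>2)) > 0" using ellK_ge[of "sqrt (1 - k\<^sup>2)"] pi_gt_zero by linarith
  show "0 < nome k" unfolding nome_def by simp
  have "pi * ellK (sqrt (1 - k\<^sup>2)) / ellK k > 0" using K K' by simp
  then show "nome k < 1" unfolding nome_def by simp
qed

lemma jacobi_real:
  assumes "0 < k" "k < 1"
  shows "jacobi_sn (of_real s) k \<in> \<real>" "jacobi_cn (of_real s) k \<in> \<real>" "jacobi_dn (of_real s) k \<in> \<real>"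
proof -
  note q = nome_bounds[OF assms]
  have v: "of_real pi * of_real s / (2 * of_real (ellK k)) = (of_real (pi * s / (2 * ellK k)) :: complex)"
    by simp
  have z: "(0::complex) = of_real 0" by simp
  note th = theta_real[OF q]
  show "jacobi_sn (of_real s) k \<in> \<real>" unfolding jacobi_sn_def Let_def v
    by (subst (1 2) z) (intro Reals_mult Reals_divide th)
  show "jacobi_cn (of_real s) k \<in> \<real>" unfolding jacobi_cn_def Let_def v
    by (subst (1 2) z) (intro Reals_mult Reals_divide th)
  show "jacobi_dn (of_real s) k \<in> \<real>" unfolding jacobi_dn_def Let_def v
    by (subst (1 2) z) (intro Reals_mult Reals_divide th)
qed

lemma params:
  assumes "J1 < J2" "J2 < J3"
  shows "0 < k_par J1 J2 J3" "k_par J1 J2 J3 < 1" "K_par J1 J2 J3 > 0" "K'_par J1 J2 J3 > 0"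
proof -
  have "0 < (J2 - J1) / (J3 - J1)" "(J2 - J1) / (J3 - J1) < 1" using assms by (auto simp: divide_simps)
  then show k: "0 < k_par J1 J2 J3" "k_par J1 J2 J3 < 1" unfolding k_par_def by (auto simp: real_sqrt_less_iff)
  show "K_par J1 J2 J3 > 0" unfolding K_par_def using ellK_ge[of "k_par J1 J2 J3"] k pi_gt_zero by linarith
  have "(k_par J1 J2 J3)\<^sup>2 > 0" using k by simp
  then have "sqrt (1 - (k_par J1 J2 J3)\<^sup>2) < 1" by simp
  moreover have "0 \<le> sqrt (1 - (k_par J1 J2 J3)\<^sup>2)" using k by (simp add: power_le_one)
  ultimately show "K'_par J1 J2 J3 > 0" unfolding K'_par_def
    using ellK_ge[of "sqrt (1 - (k_par J1 J2 J3)\<^sup>2)"] pi_gt_zero by linarith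
qed

lemma vartheta_real:
  assumes "J1 < J2" "J2 < J3"
  shows "vartheta J1 J2 J3 x t (of_real s) \<in> \<real>"
proof -
  note k = params(1,2)[OF assms]
  note jr = jacobi_real[OF k]
  show ?thesis
    unfolding vartheta_def w1_def w2_def w3_def
    by (intro Reals_diff Reals_mult Reals_divide Reals_of_real Reals_numeral jr)
qed

lemma jumpG_herm:
  assumes "J1 < J2" "J2 < J3"
  shows "adjm (jumpG J1 J2 J3 r x t (of_real s)) = jumpG J1 J2 J3 r x t (of_real s)"
proof -
  define \<theta> where "\<theta> = vartheta J1 J2 J3 x t (of_real s)"
  have th: "cnj \<theta> = \<theta>" using vartheta_real[OF assms] unfolding \<theta>_def by (simp add: Reals_cnj_iff)
  have e1: "cnj (exp (2 * \<i> * \<theta>)) = exp (- 2 * \<i> * \<theta>)" by (simp add: exp_cnj th)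
  have e2: "cnj (exp (- (2 * \<i> * \<theta>))) = exp (2 * \<i> * \<theta>)" by (simp add: exp_cnj th)
  show ?thesis unfolding jumpG_def Let_def \<theta>_def[symmetric] adjm_mat2
    by (simp add: e1 e2)
qed

lemma mat1_mat2: "(mat 1 :: complex^2^2) = mat2 1 0 0 1"
  by (simp add: mat_def mat2_def vec_eq_iff forall_2)

lemma matrix_inv_eqI:
  fixes A B :: "complex^2^2"
  assumes "A ** B = mat 1" "B ** A = mat 1"
  shows "matrix_inv A = B"
proof -
  have ex: "\<exists>A'. A ** A' = mat 1 \<and> A' ** A = mat 1" using assms by blast
  define A' where "A' = matrix_inv A"
  have A': "A ** A' = mat 1 \<and> A' ** A = mat 1"
    unfolding A'_def matrix_inv_def by (rule someI_ex[OF ex])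
  have "B = B ** (A ** A')" using A' by (simp add: matrix_mul_rid)
  also have "\<dots> = (B ** A) ** A'" by (simp add: matrix_mul_assoc)
  also have "\<dots> = A'" using assms by (simp add: matrix_mul_lid)
  finally show ?thesis unfolding A'_def by simp
qed

lemma sig3_conj: "sigma3 ** mat2 a b c d ** sigma3 = mat2 a (-b) (-c) d"
  by (simp add: sigma3_def mat2_mult)

lemma sig1_conj: "sigma1 ** mat2 a b c d ** sigma1 = mat2 d c b a"
  by (simp add: sigma1_def mat2_mult)


lemma mat2_cases: obtains a b c d where "A = mat2 a b c d"
  using mat2_eta by blast

lemma sig3_inv: "sigma3 ** A ** sigma3 = B \<Longrightarrow> A = sigma3 ** B ** sigma3"
  by (cases A rule: mat2_cases) (auto simp: sig3_conj)

lemma sig1_inv: "sigma1 ** A ** sigma1 = B \<Longrightarrow> A = sigma1 ** B ** sigma1"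
  by (cases A rule: mat2_cases) (auto simp: sig1_conj)

lemma sig3_W: "(sigma3 ** A ** sigma3) ** adjm (sigma3 ** B ** sigma3) = sigma3 ** (A ** adjm B) ** sigma3"
  by (cases A rule: mat2_cases, cases B rule: mat2_cases) (simp add: sig3_conj adjm_mat2 mat2_mult)

lemma sig1_W: "(sigma1 ** A ** sigma1) ** adjm (sigma1 ** B ** sigma1) = sigma1 ** (A ** adjm B) ** sigma1"
  by (cases A rule: mat2_cases, cases B rule: mat2_cases) (simp add: sig1_conj adjm_mat2 mat2_mult add.commute)

lemma adjm_mult: "adjm (A ** B) = adjm B ** adjm A"
  by (cases A rule: mat2_cases, cases B rule: mat2_cases) (simp add: adjm_mat2 mat2_mult mult.commute)

definition Dc :: "real \<Rightarrow> complex set" where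
  "Dc c = {z. \<forall>n::int. Im z \<noteq> c * of_int n}"

lemma rhp_domain_Dc: "rhp_domain J1 J2 J3 = Dc (2 * K'_par J1 J2 J3)"
  by (simp add: rhp_domain_def Dc_def)

lemma Dc_strip:
  assumes "c > 0" "c * of_int n < Im z" "Im z < c * (of_int n + 1)"
  shows "z \<in> Dc c"
proof -
  have "Im z \<noteq> c * of_int m" for m :: int
  proof
    assume "Im z = c * of_int m"
    with assms have "of_int n < (of_int m :: real)" "(of_int m :: real) < of_int n + 1"
      by (auto simp: mult_less_cancel_left_pos)
    then have "n < m" "m < n + 1" by linarith+
    then show False by linarith
  qed
  then show ?thesis by (simp add: Dc_def)
qed

lemma Dc_strip':
  assumes "c > 0" "\<bar>Im z - c * of_int n\<bar> < c" "Im z \<noteq> c * of_int n"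
  shows "z \<in> Dc c"
proof (cases "Im z < c * of_int n")
  case True
  then show ?thesis using assms by (intro Dc_strip[of c "n - 1"]) (auto simp: algebra_simps)
next
  case False
  then show ?thesis using assms by (intro Dc_strip[of c n]) (auto simp: algebra_simps)
qed

lemma Dc_open: assumes "c > 0" shows "open (Dc c)"
proof -
  have eq: "Dc c = (\<lambda>z. Im z / c) -` (- \<int>)"
  proof (rule set_eqI)
    fix z :: complex
    have "Im z / c \<in> \<int> \<longleftrightarrow> (\<exists>n::int. Im z = c * of_int n)"
    proof
      assume "Im z / c \<in> \<int>"
      then obtain n where "Im z / c = of_int n" by (auto elim!: Ints_cases)
      then have "Im z = c * of_int n" using assms by (simp add: field_simps)
      then show "\<exists>n::int. Im z = c * of_int n" by blast
    next
      assume "\<exists>n::int. Im z = c * of_int n"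
      then obtain n :: int where "Im z = c * of_int n" by blast
      then show "Im z / c \<in> \<int>" using assms by simp
    qed
    then show "z \<in> Dc c \<longleftrightarrow> z \<in> (\<lambda>z. Im z / c) -` (- \<int>)" by (auto simp: Dc_def)
  qed
  show ?thesis unfolding eq
    using assms by (intro continuous_open_vimage open_Compl closed_Ints) (auto intro!: continuous_intros)
qed

lemma Dc_cnj: "cnj z \<in> Dc c \<longleftrightarrow> z \<in> Dc c"
proof -
  have "(\<forall>n::int. - Im z \<noteq> c * of_int n) \<longleftrightarrow> (\<forall>n::int. Im z \<noteq> c * of_int n)"
  proof
    assume h: "\<forall>n::int. - Im z \<noteq> c * of_int n"
    show "\<forall>n::int. Im z \<noteq> c * of_int n"
    proof
      fix n :: int show "Im z \<noteq> c * of_int n" using h[rule_format, of "-n"] by auto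
    qed
  next
    assume h: "\<forall>n::int. Im z \<noteq> c * of_int n"
    show "\<forall>n::int. - Im z \<noteq> c * of_int n"
    proof
      fix n :: int show "- Im z \<noteq> c * of_int n" using h[rule_format, of "-n"] by auto
    qed
  qed
  then show ?thesis by (simp add: Dc_def)
qed

lemma Dc_real_shift: "z + of_real a \<in> Dc c \<longleftrightarrow> z \<in> Dc c"
  by (simp add: Dc_def)

lemma Dc_int_shift: "z + \<i> * of_real (c * of_int m) \<in> Dc c \<longleftrightarrow> z \<in> Dc c"
proof -
  have "(\<forall>n::int. Im z + c * of_int m \<noteq> c * of_int n) \<longleftrightarrow> (\<forall>n::int. Im z \<noteq> c * of_int n)"
  proof
    assume h: "\<forall>n::int. Im z + c * of_int m \<noteq> c * of_int n"
    show "\<forall>n::int. Im z \<noteq> c * of_int n"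
    proof
      fix n :: int show "Im z \<noteq> c * of_int n" using h[rule_format, of "n + m"] by (auto simp: algebra_simps)
    qed
  next
    assume h: "\<forall>n::int. Im z \<noteq> c * of_int n"
    show "\<forall>n::int. Im z + c * of_int m \<noteq> c * of_int n"
    proof
      fix n :: int show "Im z + c * of_int m \<noteq> c * of_int n" using h[rule_format, of "n - m"] by (auto simp: algebra_simps)
    qed
  qed
  then show ?thesis by (simp add: Dc_def)
qed

lemma Dc_shift1: "z + \<i> * of_real c \<in> Dc c \<longleftrightarrow> z \<in> Dc c"
  using Dc_int_shift[of z c 1] by simp

lemma Dc_shiftm1: "z - \<i> * of_real c \<in> Dc c \<longleftrightarrow> z \<in> Dc c"
  using Dc_int_shift[of z c "-1"] by simp

lemma Dc_limpt: assumes "c > 0" shows "x islimpt Dc c"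
proof (unfold islimpt_approachable, intro allI impI)
  fix e :: real assume e: "e > 0"
  define n where "n = \<lfloor>Im x / c\<rfloor>"
  have n1: "c * of_int n \<le> Im x" using assms unfolding n_def
    by (metis floor_divide_lower mult.commute)
  have n2: "Im x < c * (of_int n + 1)" using assms unfolding n_def
    by (metis floor_divide_upper mult.commute)
  define M where "M = c * (of_int n + 1)"
  define t where "t = min e (M - Im x) / 2"
  have "Im x < M" using n2 by (simp add: M_def)
  then have t: "t > 0" "t < e" "Im x + t < M" using e unfolding t_def by (auto simp: min_def field_simps)
  define w where "w = x + \<i> * of_real t"
  have "w \<in> Dc c" unfolding w_def using t n1 unfolding M_def by (intro Dc_strip[OF assms, of n]) auto
  moreover have "w \<noteq> x" "dist w x < e" using t by (auto simp: w_def dist_norm norm_mult)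
  ultimately show "\<exists>x'\<in>Dc c. x' \<noteq> x \<and> dist x' x < e" by blast
qed

lemma notDc: "z \<notin> Dc c \<Longrightarrow> \<exists>n::int. Im z = c * of_int n"
  by (auto simp: Dc_def)

lemma pauli_sum: "cscale L1 sigma1 + cscale L2 sigma2 + cscale L3 sigma3 = mat2 L3 (L1 - \<i> * L2) (L1 + \<i> * L2) (- L3)"
  by (simp add: cscale_def sigma1_def sigma2_def sigma3_def mat2_def vec_eq_iff forall_2)

lemma final_alg:
  fixes a b c d p L1 L2 L3 :: complex
  assumes det: "a * d - b * c = 1"
    and U: "mat2 a b c d ** adjm (mat2 a b c d) = mat2 p 0 0 p"
    and M: "mat2 a b c d ** sigma3 ** matrix_inv (mat2 a b c d)
           = cscale L1 sigma1 + cscale L2 sigma2 + cscale L3 sigma3"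
  shows "L1 \<in> \<real> \<and> L2 \<in> \<real> \<and> L3 \<in> \<real>"
proof -
  have inv: "matrix_inv (mat2 a b c d) = mat2 d (-b) (-c) a"
    by (rule matrix_inv_eqI) (use det in \<open>simp_all add: mat1_mat2 mat2_mult algebra_simps\<close>)
  have "mat2 a b c d ** sigma3 ** matrix_inv (mat2 a b c d) = mat2 (a*d + b*c) (-2*a*b) (2*c*d) (-(a*d) - b*c)"
    unfolding inv sigma3_def mat2_mult by (simp add: algebra_simps)
  with M have "mat2 (a*d + b*c) (-2*a*b) (2*c*d) (-(a*d) - b*c) = mat2 L3 (L1 - \<i> * L2) (L1 + \<i> * L2) (- L3)"
    unfolding pauli_sum by simp
  then have e: "a*d + b*c = L3" "-2*a*b = L1 - \<i> * L2" "2*c*d = L1 + \<i> * L2"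
    unfolding mat2_eq_iff by auto
  have "2 * L1 = 2*c*d + (-2*a*b)" unfolding e(2,3) by simp
  then have "2 * L1 = 2 * (c*d - a*b)" by (simp add: algebra_simps)
  then have L1: "L1 = c*d - a*b" by (rule mult_left_cancel[THEN iffD1, rotated]) simp
  have "2 * \<i> * L2 = 2*c*d - (-2*a*b)" unfolding e(2,3) by simp
  then have "2 * (\<i> * L2) = 2 * (c*d + a*b)" by (simp add: algebra_simps)
  then have iL2: "\<i> * L2 = c*d + a*b" by (rule mult_left_cancel[THEN iffD1, rotated]) simp
  have L2: "L2 = - \<i> * (c*d + a*b)" unfolding iL2[symmetric] by (simp flip: mult.assoc)
  from U have u: "a * cnj a + b * cnj b = p" "a * cnj c + b * cnj d = 0"
      "c * cnj a + d * cnj b = 0" "c * cnj c + d * cnj d = p"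
    unfolding adjm_mat2 mat2_mult mat2_eq_iff by auto
  have ca: "cnj a = p * d"
  proof -
    have "cnj a = cnj a * (a * d - b * c)" using det by simp
    also have "\<dots> = d * (a * cnj a + b * cnj b) - b * (c * cnj a + d * cnj b)" by (simp add: algebra_simps)
    finally show ?thesis unfolding u by simp
  qed
  have cc: "cnj c = - p * b"
  proof -
    have "cnj c = cnj c * (a * d - b * c)" using det by simp
    also have "\<dots> = d * (a * cnj c + b * cnj d) - b * (c * cnj c + d * cnj d)" by (simp add: algebra_simps)
    finally show ?thesis unfolding u by simp
  qed
  have cb: "cnj b = - p * c"
  proof -
    have "cnj b = cnj b * (a * d - b * c)" using det by simp
    also have "\<dots> = a * (c * cnj a + d * cnj b) - c * (a * cnj a + b * cnj b)" by (simp add: algebra_simps)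
    finally show ?thesis unfolding u by simp
  qed
  have cd: "cnj d = p * a"
  proof -
    have "cnj d = cnj d * (a * d - b * c)" using det by simp
    also have "\<dots> = a * (c * cnj c + d * cnj d) - c * (a * cnj c + b * cnj d)" by (simp add: algebra_simps)
    finally show ?thesis unfolding u by simp
  qed
  have "cnj (a * d - b * c) = p * p * (a * d - b * c)"
    by (simp add: ca cb cc cd algebra_simps)
  then have pp: "p * p = 1" using det by simp
  have "cnj L1 = (p*p) * (c*d - a*b)" unfolding L1 by (simp add: ca cb cc cd algebra_simps)
  then have "cnj L1 = L1" unfolding pp L1 by simp
  moreover have "cnj L2 = (p*p) * (- \<i> * (c*d + a*b))" unfolding L2 by (simp add: ca cb cc cd algebra_simps)
  then have "cnj L2 = L2" unfolding pp L2 by simp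
  moreover have "cnj L3 = (p*p) * (a*d + b*c)" unfolding e(1)[symmetric] by (simp add: ca cb cc cd algebra_simps)
  then have "cnj L3 = L3" unfolding pp e(1) by simp
  ultimately show ?thesis by (simp add: Reals_cnj_iff)
qed

lemma holo_cnj_cnj:
  assumes "f holomorphic_on S" "open S" "\<And>z. z \<in> S \<Longrightarrow> cnj z \<in> S"
  shows "(\<lambda>z. cnj (f (cnj z))) holomorphic_on S"
proof -
  have "\<exists>f'. DERIV (\<lambda>z. cnj (f (cnj z))) x :> f'" if "x \<in> S" for x
  proof -
    from assms that obtain f' where "DERIV f (cnj x) :> f'"
      unfolding holomorphic_on_open[OF assms(2)] by blast
    from has_field_derivative_cnj_cnj[OF this] show ?thesis by (auto simp: o_def)
  qed
  then show ?thesis using assms(2) by (simp add: holomorphic_on_open)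
qed

lemma sig1_twice: "sigma1 ** (sigma1 ** A ** sigma1) ** sigma1 = A"
  by (cases A rule: mat2_cases) (simp add: sig1_conj)

lemma dist_cnj_real: "dist (cnj z) (complex_of_real s) = dist z (complex_of_real s)"
proof -
  have "cnj z - complex_of_real s = cnj (z - complex_of_real s)" by simp
  then show ?thesis by (simp only: dist_norm complex_mod_cnj)
qed

lemma islimpt_upper: "x islimpt {z. Im z > Im x}"
proof (unfold islimpt_approachable, intro allI impI)
  fix e :: real assume e: "e > 0"
  show "\<exists>x'\<in>{z. Im z > Im x}. x' \<noteq> x \<and> dist x' x < e"
    by (rule bexI[of _ "x + \<i> * of_real (e/2)"]) (use e in \<open>auto simp: dist_norm norm_mult\<close>)
qed

lemma main_analytic:
  fixes Y :: "complex \<Rightarrow> complex^2^2" and G :: "real \<Rightarrow> complex^2^2"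
  assumes c: "c > 0"
    and bnd: "bounded (Y ` Dc c)"
    and hol: "\<forall>i j. (\<lambda>z. Y z $ i $ j) holomorphic_on Dc c"
    and jump: "\<forall>s::real. \<exists>Yp Ym. (Y \<longlongrightarrow> Yp) (at (of_real s) within {z. Im z > 0})
                 \<and> (Y \<longlongrightarrow> Ym) (at (of_real s) within {z. Im z < 0}) \<and> Yp = Ym ** G s"
    and herm: "\<And>s. adjm (G s) = G s"
    and s3: "\<forall>z\<in>Dc c. sigma3 ** Y (z + of_real K2) ** sigma3 = Y z"
    and s1: "\<forall>z\<in>Dc c. sigma1 ** Y (z + \<i> * of_real c) ** sigma1 = Y z"
    and Y0p: "(Y \<longlongrightarrow> Y0) (at 0 within {z. Im z > 0})"
    and Y0m: "(Y \<longlongrightarrow> Y0) (at 0 within {z. Im z < 0})"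
  shows "\<exists>p. Y0 ** adjm Y0 = mat2 p 0 0 p"
proof -
  define D where "D = Dc c"
  define W where "W = (\<lambda>z. Y z ** adjm (Y (cnj z)))"
  have Dopen: "open D" unfolding D_def using Dc_open[OF c] .
  have Dlp: "\<And>x. x islimpt D" unfolding D_def using Dc_limpt[OF c] .
  have Dcnj: "\<And>z. z \<in> D \<Longrightarrow> cnj z \<in> D" unfolding D_def using Dc_cnj by blast
  have W3: "W (z + of_real K2) = sigma3 ** W z ** sigma3" if z: "z \<in> D" for z
  proof -
    have a: "Y (z + of_real K2) = sigma3 ** Y z ** sigma3"
      using sig3_inv s3 z unfolding D_def by blast
    have b: "Y (cnj z + of_real K2) = sigma3 ** Y (cnj z) ** sigma3"
      using sig3_inv s3 Dcnj[OF z] unfolding D_def by blast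
    have "cnj (z + of_real K2) = cnj z + of_real K2" by simp
    then show ?thesis unfolding W_def using a b sig3_W by simp
  qed
  have W1: "W (z + \<i> * of_real c) = sigma1 ** W z ** sigma1" if z: "z \<in> D" for z
  proof -
    have a: "Y (z + \<i> * of_real c) = sigma1 ** Y z ** sigma1"
      using sig1_inv s1 z unfolding D_def by blast
    have wD: "cnj z - \<i> * of_real c \<in> Dc c" using Dcnj[OF z] Dc_shiftm1 unfolding D_def by blast
    have "sigma1 ** Y (cnj z - \<i> * of_real c + \<i> * of_real c) ** sigma1 = Y (cnj z - \<i> * of_real c)"
      using s1 wD by blast
    then have b: "Y (cnj z - \<i> * of_real c) = sigma1 ** Y (cnj z) ** sigma1" by simp
    have "cnj (z + \<i> * of_real c) = cnj z - \<i> * of_real c" by simp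
    then show ?thesis unfolding W_def using a b sig1_W by simp
  qed
  have W1m: "W (z - \<i> * of_real c) = sigma1 ** W z ** sigma1" if z: "z \<in> D" for z
  proof -
    have "z - \<i> * of_real c \<in> D" using z Dc_shiftm1 unfolding D_def by blast
    from W1[OF this] have "sigma1 ** W (z - \<i> * of_real c) ** sigma1 = W z" by (simp add: sig1_twice)
    then show ?thesis by (rule sig1_inv)
  qed
  define F where "F = (\<lambda>(n::int) A. if even n then A else sigma1 ** A ** sigma1)"
  have Wnat: "W (z + \<i> * of_real (c * of_nat m)) = F (int m) (W z) \<and>
              W (z - \<i> * of_real (c * of_nat m)) = F (int m) (W z)" if z: "z \<in> D" for z m
  proof (induction m)
    case 0 then show ?case by (simp add: F_def)
  next
    case (Suc m)
    have d1: "z + \<i> * of_real (c * of_nat m) \<in> D"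
      using Dc_int_shift[of z c "int m"] z unfolding D_def by simp
    have "z + \<i> * of_real (c * of_int (- int m)) \<in> Dc c"
      using Dc_int_shift[of z c "- int m"] z unfolding D_def by blast
    then have d2: "z - \<i> * of_real (c * of_nat m) \<in> D"
      unfolding D_def by (simp add: algebra_simps)
    have e1: "z + \<i> * of_real (c * of_nat (Suc m)) = (z + \<i> * of_real (c * of_nat m)) + \<i> * of_real c"
      by (simp add: algebra_simps)
    have e2: "z - \<i> * of_real (c * of_nat (Suc m)) = (z - \<i> * of_real (c * of_nat m)) - \<i> * of_real c"
      by (simp add: algebra_simps)
    show ?case unfolding e1 e2 W1[OF d1] W1m[OF d2] Suc.IH[THEN conjunct1] Suc.IH[THEN conjunct2]
      by (simp add: F_def sig1_twice)
  qed
  have Wint: "W (z + \<i> * of_real (c * of_int n)) = F n (W z)" if z: "z \<in> D" for z n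
  proof (cases "n \<ge> 0")
    case True
    then obtain m where "n = int m" using nonneg_int_cases by blast
    then show ?thesis using Wnat[OF z, of m] by simp
  next
    case False
    have m: "n = - int (nat (-n))" using False by simp
    define m where "m = nat (-n)"
    note m = m[folded m_def]
    have "F n = F (int m)" unfolding F_def by (subst m) simp
    moreover have "z + \<i> * of_real (c * of_int n) = z - \<i> * of_real (c * of_nat m)"
      by (subst m) (simp add: algebra_simps)
    ultimately show ?thesis using Wnat[OF z, of m] by simp
  qed
  have Wentry: "W z $ i $ j = (\<Sum>k\<in>UNIV. Y z $ i $ k * cnj (Y (cnj z) $ j $ k))" for z i j
    unfolding W_def matrix_matrix_mult_def adjm_def by simp
  have Whol: "(\<lambda>z. W z $ i $ j) holomorphic_on D" for i j
  proof -
    have "(\<lambda>z. \<Sum>k\<in>UNIV. Y z $ i $ k * cnj (Y (cnj z) $ j $ k)) holomorphic_on D"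
      using hol Dopen Dcnj unfolding D_def[symmetric]
      by (intro holomorphic_on_sum holomorphic_on_mult holo_cnj_cnj) auto
    then show ?thesis unfolding Wentry .
  qed
  have Wcont: "(W \<longlongrightarrow> W x) (at x within D)" if "x \<in> D" for x
  proof (rule vec_tendstoI, rule vec_tendstoI)
    fix i j
    have "continuous_on D (\<lambda>z. W z $ i $ j)" using Whol holomorphic_on_imp_continuous_on by blast
    then show "((\<lambda>z. W z $ i $ j) \<longlongrightarrow> W x $ i $ j) (at x within D)"
      using that unfolding continuous_on_def by blast
  qed
  have Lreal: "\<exists>L. (W \<longlongrightarrow> L) (at (of_real s) within D)" for s
  proof -
    obtain Yp Ym where lp: "(Y \<longlongrightarrow> Yp) (at (of_real s) within {z. Im z > 0})"
      and lm: "(Y \<longlongrightarrow> Ym) (at (of_real s) within {z. Im z < 0})" and YG: "Yp = Ym ** G s"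
      using jump by blast
    have up: "(W \<longlongrightarrow> Yp ** adjm Ym) (at (of_real s) within {z. Im z > 0})"
    proof -
      have "((\<lambda>z. Y (cnj z)) \<longlongrightarrow> Ym) (at (of_real s) within {z. Im z > 0})"
        by (rule tendsto_transfer[OF lm]) (simp add: dist_cnj_real)
      then show ?thesis unfolding W_def by (intro tendsto_matmult lp tendsto_adjm)
    qed
    have down: "(W \<longlongrightarrow> Ym ** adjm Yp) (at (of_real s) within {z. Im z < 0})"
    proof -
      have "((\<lambda>z. Y (cnj z)) \<longlongrightarrow> Yp) (at (of_real s) within {z. Im z < 0})"
        by (rule tendsto_transfer[OF lp]) (simp add: dist_cnj_real)
      then show ?thesis unfolding W_def by (intro tendsto_matmult lm tendsto_adjm)
    qed
    have eq: "Yp ** adjm Ym = Ym ** adjm Yp"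
      unfolding YG adjm_mult herm by (simp add: matrix_mul_assoc)
    have "(W \<longlongrightarrow> Yp ** adjm Ym) (at (of_real s) within ({z. Im z > 0} \<union> {z. Im z < 0}))"
      using up down unfolding eq[symmetric] Lim_within_Un by blast
    moreover have "D \<subseteq> {z. Im z > 0} \<union> {z. Im z < 0}"
    proof
      fix z assume "z \<in> D"
      then have "Im z \<noteq> c * of_int (0::int)" unfolding D_def Dc_def by blast
      then show "z \<in> {z. Im z > 0} \<union> {z. Im z < 0}" by auto
    qed
    ultimately show ?thesis by (blast intro: tendsto_within_subset)
  qed
  have Lall: "\<exists>L. (W \<longlongrightarrow> L) (at x within D)" for x
  proof (cases "x \<in> D")
    case True then show ?thesis using Wcont by blast
  next
    case False
    then obtain n :: int where n: "Im x = c * of_int n" using notDc unfolding D_def by blast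
    define s where "s = Re x"
    define h where "h = \<i> * of_real (c * of_int n)"
    have x: "x = of_real s + h" unfolding s_def h_def by (simp add: complex_eq_iff n)
    obtain L where L: "(W \<longlongrightarrow> L) (at (of_real s) within D)" using Lreal by blast
    have "((\<lambda>w. W (w - h)) \<longlongrightarrow> L) (at x within D)"
    proof (rule tendsto_transfer[OF L])
      fix w assume w: "w \<in> D"
      have "w + \<i> * of_real (c * of_int (- n)) \<in> Dc c" using w Dc_int_shift unfolding D_def by blast
      then have "w - h \<in> D" unfolding D_def h_def by simp
      moreover have "dist (w - h) (of_real s) = dist w x" unfolding x dist_norm by (simp add: algebra_simps)
      ultimately show "w - h \<in> D \<and> dist (w - h) (of_real s) = dist w x" by blast
    qed
    then have "((\<lambda>w. F n (W (w - h))) \<longlongrightarrow> F n L) (at x within D)"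
      unfolding F_def by (cases "even n") (auto intro!: tendsto_matmult tendsto_const)
    moreover have "F n (W (w - h)) = W w" if "w \<in> D" for w
    proof -
      have "w + \<i> * of_real (c * of_int (- n)) \<in> Dc c" using that Dc_int_shift unfolding D_def by blast
      then have "w - h \<in> D" unfolding D_def h_def by simp
      from Wint[OF this, of n] show ?thesis unfolding h_def by simp
    qed
    ultimately have "(W \<longlongrightarrow> F n L) (at x within D)"
      by (rule Lim_transform_within[OF _ zero_less_one]) simp
    then show ?thesis by blast
  qed
  define g where "g = (\<lambda>x. if x \<in> D then W x else Lim (at x within D) W)"
  have glim: "(W \<longlongrightarrow> g x) (at x within D)" for x
  proof (cases "x \<in> D")
    case True then show ?thesis using Wcont[OF True] unfolding g_def by simp
  next
    case False
    obtain L where L: "(W \<longlongrightarrow> L) (at x within D)" using Lall by blast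
    have "\<not> trivial_limit (at x within D)" using Dlp[of x] by (simp add: trivial_limit_within)
    then have "Lim (at x within D) W = L" using L by (rule tendsto_Lim)
    then show ?thesis using False L unfolding g_def by simp
  qed
  have gcont: "continuous_on UNIV g" by (rule ext_continuous[OF glim Dlp])
  have gD: "z \<in> D \<Longrightarrow> g z = W z" for z unfolding g_def by simp
  have gholD: "(\<lambda>z. g z $ i $ j) holomorphic_on D" for i j
    using Whol[of i j] by (rule holomorphic_transform) (simp add: gD)
  have gdiff: "(\<lambda>z. g z $ i $ j) field_differentiable (at p)" for p i j
  proof (cases "p \<in> D")
    case True then show ?thesis using holomorphic_on_imp_differentiable_at[OF gholD Dopen] by blast
  next
    case False
    then obtain n :: int where n: "Im p = c * of_int n" using notDc unfolding D_def by blast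
    define S where "S = ball p c"
    have sub: "S \<inter> {z. \<i> \<bullet> z < c * of_int n} \<subseteq> D" "S \<inter> {z. c * of_int n < \<i> \<bullet> z} \<subseteq> D"
    proof -
      have "z \<in> D" if "z \<in> S" "Im z \<noteq> c * of_int n" for z
      proof -
        have "\<bar>Im z - Im p\<bar> \<le> cmod (z - p)" using abs_Im_le_cmod[of "z - p"] by simp
        also have "\<dots> < c" using that(1) unfolding S_def by (simp add: dist_norm norm_minus_commute)
        finally have "\<bar>Im z - c * of_int n\<bar> < c" using n by simp
        then show ?thesis unfolding D_def using that(2) by (rule Dc_strip'[OF c])
      qed
      then show "S \<inter> {z. \<i> \<bullet> z < c * of_int n} \<subseteq> D" "S \<inter> {z. c * of_int n < \<i> \<bullet> z} \<subseteq> D"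
        by auto
    qed
    have "(\<lambda>z. g z $ i $ j) holomorphic_on S"
    proof (rule holomorphic_on_paste_across_line[of S "\<i>" _ "c * of_int n"])
      show "open S" unfolding S_def by simp
      show "(\<lambda>z. g z $ i $ j) holomorphic_on S \<inter> {z. \<i> \<bullet> z < c * of_int n}"
        using gholD sub(1) by (rule holomorphic_on_subset)
      show "(\<lambda>z. g z $ i $ j) holomorphic_on S \<inter> {z. c * of_int n < \<i> \<bullet> z}"
        using gholD sub(2) by (rule holomorphic_on_subset)
      have "continuous_on UNIV (\<lambda>z. g z $ i $ j)"
        using gcont by (intro continuous_on_component)
      then show "continuous_on S (\<lambda>z. g z $ i $ j)"
        by (rule continuous_on_subset) simp
    qed simp
    then show ?thesis by (rule holomorphic_on_imp_differentiable_at) (simp_all add: S_def c)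
  qed
  have ghol: "(\<lambda>z. g z $ i $ j) holomorphic_on UNIV" for i j
    using gdiff by (simp add: holomorphic_on_def)
  obtain B where B: "\<And>z. z \<in> D \<Longrightarrow> norm (Y z) \<le> B"
    using bnd unfolding D_def bounded_iff by blast
  have WB: "norm (W z $ i $ j) \<le> 2 * (B * B)" if z: "z \<in> D" for z i j
  proof -
    have yb: "norm (Y w $ i $ j) \<le> B" if "w \<in> D" for w i j
      using Finite_Cartesian_Product.norm_nth_le[of "Y w $ i" j] Finite_Cartesian_Product.norm_nth_le[of "Y w" i] B[OF that] by linarith
    have "norm (W z $ i $ j) \<le> norm (Y z $ i $ 1 * cnj (Y (cnj z) $ j $ 1)) + norm (Y z $ i $ 2 * cnj (Y (cnj z) $ j $ 2))"
      unfolding Wentry sum_2 by (rule norm_triangle_ineq)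
    also have "\<dots> \<le> B * B + B * B"
      unfolding norm_mult complex_mod_cnj
      using yb[OF z, of i 1] yb[OF z, of i 2] yb[OF Dcnj[OF z], of j 1] yb[OF Dcnj[OF z], of j 2]
      by (intro add_mono mult_mono') auto
    finally show ?thesis by simp
  qed
  have gB: "norm (g z $ i $ j) \<le> 2 * (B * B)" for z i j
  proof (cases "z \<in> D")
    case True then show ?thesis using WB gD by simp
  next
    case False
    have "\<not> trivial_limit (at z within D)" using Dlp trivial_limit_within by blast
    moreover have "((\<lambda>w. W w $ i $ j) \<longlongrightarrow> g z $ i $ j) (at z within D)"
      by (intro tendsto_vec_nth glim)
    moreover have "eventually (\<lambda>w. norm (W w $ i $ j) \<le> 2 * (B * B)) (at z within D)"
      unfolding eventually_at_filter using WB by (intro always_eventually) auto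
    ultimately show ?thesis by (rule Lim_norm_ubound)
  qed
  have gconst: "g z = g 0" for z
  proof -
    have "g z $ i $ j = g 0 $ i $ j" for i j
    proof -
      have "bounded (range (\<lambda>z. g z $ i $ j))" unfolding bounded_iff using gB by blast
      then have "(\<lambda>z. g z $ i $ j) constant_on UNIV" using ghol by (intro Liouville_theorem)
      then show ?thesis unfolding constant_on_def by auto
    qed
    then show ?thesis by (simp add: vec_eq_iff)
  qed
  define C where "C = g 0"
  have WC: "z \<in> D \<Longrightarrow> W z = C" for z using gconst[of z] gD[of z] unfolding C_def by simp
  define z0 where "z0 = \<i> * of_real (c / 2)"
  have "Im z0 = c / 2" unfolding z0_def by simp
  then have z0: "z0 \<in> D" unfolding D_def using c by (intro Dc_strip[OF c, of 0]) simp_all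
  have z03: "z0 + of_real K2 \<in> D" using z0 Dc_real_shift unfolding D_def by blast
  have z01: "z0 + \<i> * of_real c \<in> D" using z0 Dc_shift1 unfolding D_def by blast
  have "C = sigma3 ** C ** sigma3" using W3[OF z0] unfolding WC[OF z0] WC[OF z03] .
  then have C3: "sigma3 ** C ** sigma3 = C" by (rule sym)
  have "C = sigma1 ** C ** sigma1" using W1[OF z0] unfolding WC[OF z0] WC[OF z01] .
  then have C1: "sigma1 ** C ** sigma1 = C" by (rule sym)
  have lim0: "(W \<longlongrightarrow> Y0 ** adjm Y0) (at 0 within {z. Im z > 0})"
  proof -
    have "((\<lambda>z. Y (cnj z)) \<longlongrightarrow> Y0) (at 0 within {z. Im z > 0})"
      by (rule tendsto_transfer[OF Y0m]) (simp add: dist_norm)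
    then show ?thesis unfolding W_def by (intro tendsto_matmult Y0p tendsto_adjm)
  qed
  have limC: "(W \<longlongrightarrow> C) (at 0 within {z. Im z > 0})"
  proof (rule Lim_transform_within[OF tendsto_const c])
    fix z assume z: "z \<in> {z. Im z > 0}" "0 < dist z 0" "dist z 0 < c"
    have "Im z \<le> cmod z" using abs_Im_le_cmod[of z] by linarith
    then have "Im z < c" using z(3) by simp
    then have "z \<in> D" unfolding D_def using z(1) by (intro Dc_strip[OF c, of 0]) simp_all
    then show "C = W z" using WC by simp
  qed
  have nt: "\<not> trivial_limit (at (0::complex) within {z. Im z > 0})"
    using islimpt_upper[of 0] by (simp add: trivial_limit_within)
  have CY: "C = Y0 ** adjm Y0" by (rule tendsto_unique[OF nt limC lim0])
  obtain p q r u where Cm: "C = mat2 p q r u" by (rule mat2_cases)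
  have m3: "mat2 p (-q) (-r) u = mat2 p q r u" and m1: "mat2 u r q p = mat2 p q r u"
    using C3 C1 unfolding Cm sig3_conj sig1_conj by simp_all
  have "-q = q" "-r = r" using m3 mat2_eq_iff[of p "-q" "-r" u p q r u] by blast+
  then have q0: "q = 0" "r = 0" by (simp_all add: eq_neg_iff_add_eq_0 flip: mult_2)
  have "u = p" using m1 mat2_eq_iff[of u r q p p q r u] by blast
  then have "Y0 ** adjm Y0 = mat2 p 0 0 p" using CY Cm q0 by simp
  then show ?thesis by blast
qed
lemma det_lim:
  fixes Y :: "complex \<Rightarrow> complex^2^2"
  assumes c: "c > 0"
    and det: "\<forall>z\<in>Dc c. det (Y z) = 1"
    and Y0p: "(Y \<longlongrightarrow> Y0) (at 0 within {z. Im z > 0})"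
  shows "det Y0 = 1"
proof -
  have l: "((\<lambda>z. det (Y z)) \<longlongrightarrow> det Y0) (at 0 within {z. Im z > 0})"
    unfolding det_2 using Y0p by (intro tendsto_intros)
  have l1: "((\<lambda>z. det (Y z)) \<longlongrightarrow> 1) (at 0 within {z. Im z > 0})"
  proof (rule Lim_transform_within[OF tendsto_const c])
    fix z assume z: "z \<in> {z. Im z > 0}" "0 < dist z 0" "dist z 0 < c"
    have "Im z \<le> cmod z" using abs_Im_le_cmod[of z] by linarith
    then have "Im z < c" using z(3) by simp
    then have "z \<in> Dc c" using z(1) by (intro Dc_strip[OF c, of 0]) simp_all
    then show "1 = det (Y z)" using det by simp
  qed
  have nt: "\<not> trivial_limit (at (0::complex) within {z. Im z > 0})"
    using islimpt_upper[of 0] by (simp add: trivial_limit_within)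
  show ?thesis using tendsto_unique[OF nt l l1] .
qed

theorem proposition4p6:
  fixes J1 J2 J3 x t :: real
    and r :: "complex \<Rightarrow> complex"
    and Y :: "complex \<Rightarrow> complex^2^2"
    and Y0 :: "complex^2^2"
    and L1 L2 L3 :: complex
  assumes "J1 < J2" and "J2 < J3"
    and "admissible_r J1 J2 J3 r"
    and "solves_RHP2 J1 J2 J3 r x t Y"
    and "(Y \<longlongrightarrow> Y0) (at 0 within {z. Im z > 0})"
    and "(Y \<longlongrightarrow> Y0) (at 0 within {z. Im z < 0})"
    and "Y0 ** sigma3 ** matrix_inv Y0
           = cscale L1 sigma1 + cscale L2 sigma2 + cscale L3 sigma3"
  shows "L1 \<in> \<real> \<and> L2 \<in> \<real> \<and> L3 \<in> \<real>"
proof -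
  define K where "K = K_par J1 J2 J3"
  define K' where "K' = K'_par J1 J2 J3"
  define G where "G = (\<lambda>s::real. jumpG J1 J2 J3 r x t (of_real s))"
  have c: "2 * K' > 0" using params(4)[OF assms(1,2)] unfolding K'_def by simp
  note S = assms(4)[unfolded solves_RHP2_def Let_def rhp_domain_Dc, folded K_def K'_def]
  have bnd: "bounded (Y ` Dc (2 * K'))" using S by blast
  have hol: "\<forall>i j. (\<lambda>z. Y z $ i $ j) holomorphic_on Dc (2 * K')" using S by blast
  have jump: "\<forall>s::real. \<exists>Yp Ym. (Y \<longlongrightarrow> Yp) (at (of_real s) within {z. Im z > 0})
                 \<and> (Y \<longlongrightarrow> Ym) (at (of_real s) within {z. Im z < 0}) \<and> Yp = Ym ** G s"
    using S unfolding G_def by blast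
  have herm: "\<And>s. adjm (G s) = G s" unfolding G_def using jumpG_herm[OF assms(1,2)] by blast
  have s3: "\<forall>z\<in>Dc (2 * K'). sigma3 ** Y (z + of_real (2 * K)) ** sigma3 = Y z" using S by blast
  have s1: "\<forall>z\<in>Dc (2 * K'). sigma1 ** Y (z + \<i> * of_real (2 * K')) ** sigma1 = Y z" using S by blast
  have det: "\<forall>z\<in>Dc (2 * K'). det (Y z) = 1" using S by blast
  obtain p where U: "Y0 ** adjm Y0 = mat2 p 0 0 p"
    using main_analytic[OF c bnd hol jump herm s3 s1 assms(5,6)] by blast
  have d: "det Y0 = 1" by (rule det_lim[OF c det assms(5)])
  obtain a b cc dd where Y0: "Y0 = mat2 a b cc dd" by (rule mat2_cases)
  show ?thesis
    by (rule final_alg[of a dd b cc p]) (use U d assms(7) in \<open>simp_all add: Y0 det_mat2\<close>)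
qed

end
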